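(* Let $u_t=F$ be an autonomous evolution PDE for a scalar $u(x,t)$, with $F=c_1 u + c_2 u^2 + c_3 u^3 + c_4 u_x + c_5 u_{xx} + c_6 u_{xxx} + c_7 u_{xxxx} + c_8\, u u_x + c_9\, u u_{xx} + c_{10}\, u^2 u_x$ for real constants $c_j$, where $1,u,u^2,u_x,u_{xx},u\cdot u_x$ are linearly independent on the jet space $J^{(2)}$. If the PDE is Galilean-invariant, i.e. admits the Lie point symmetry generator $t\partial_x+\partial_u$, then its true support $S^*=\{\text{terms with } c_j\neq 0\}$ is contained in the implementation-reduced library $\mathcal{L}_G=\{u_x,u_{xx},u_{xxx},u_{xxxx},u\cdot u_x,u\cdot u_{xx},u^2\cdot u_x\}$ (the ten-term library with $u,u^2,u^3$ removed).
   Context: A PDE $u_t=F$ admits the generator $\mathbf v=t\partial_x+\partial_u$ if the prolonged vector field $\mathrm{pr}\,\mathbf v$ annihilates $u_t-F$ whenever $u_t=F$; equivalently the Galilean boost $(x,t,u)\mapsto(x+ct,t,u+c)$ maps solutions to solutions for every $c\in\mathbb R$. Subscripts denote partial derivatives. *)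

theory Defs
  imports Complex_Main
begin

record jet4 =
  jx :: real
  jt :: real
  ju :: real
  jut :: real
  jux :: real
  juxx :: real
  juxxx :: real
  juxxxx :: real

definition rhsF :: "(nat \<Rightarrow> real) \<Rightarrow> jet4 \<Rightarrow> real" where
  "rhsF c J =
     c 1 * ju J + c 2 * (ju J)^2 + c 3 * (ju J)^3 + c 4 * jux J + c 5 * juxx J
   + c 6 * juxxx J + c 7 * juxxxx J + c 8 * (ju J * jux J) + c 9 * (ju J * juxx J)
   + c 10 * ((ju J)^2 * jux J)"

definition on_pde :: "(nat \<Rightarrow> real) \<Rightarrow> jet4 \<Rightarrow> bool" where
  "on_pde c J \<longleftrightarrow> jut J = rhsF c J"

text \<open>Prolongation to J^(4) of the Galilean boost (x,t,u) \<mapsto> (x+\<epsilon>t, t, u+\<epsilon>):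
  the transformed function is U(X,t) = u(X-\<epsilon>t,t)+\<epsilon>, so U_t = u_t - \<epsilon> u_x and
  all pure x-derivatives are unchanged.\<close>
definition galilean_boost :: "real \<Rightarrow> jet4 \<Rightarrow> jet4" where
  "galilean_boost \<epsilon> J =
     J\<lparr>jx := jx J + \<epsilon> * jt J, ju := ju J + \<epsilon>, jut := jut J - \<epsilon> * jux J\<rparr>"

definition galilean_invariant :: "(nat \<Rightarrow> real) \<Rightarrow> bool" where
  "galilean_invariant c \<longleftrightarrow>
     (\<forall>\<epsilon> J. on_pde c J \<longrightarrow> on_pde c (galilean_boost \<epsilon> J))"

definition true_support :: "(nat \<Rightarrow> real) \<Rightarrow> nat set" where
  "true_support c = {j \<in> {1..10}. c j \<noteq> 0}"

definition library_G :: "nat set" where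
  "library_G = {4, 5, 6, 7, 8, 9, 10}"

end

theory Submission
  imports Defs
begin

lemma key:
  fixes c :: "nat \<Rightarrow> real"
  assumes "galilean_invariant c"
  shows "c 1 * e + c 2 * e^2 + c 3 * e^3 = 0"
proof -
  let ?J = "\<lparr>jx = 0, jt = 0, ju = 0, jut = 0, jux = 0, juxx = 0, juxxx = 0, juxxxx = 0\<rparr>"
  have "on_pde c ?J" by (simp add: on_pde_def rhsF_def)
  then have "on_pde c (galilean_boost e ?J)"
    using assms unfolding galilean_invariant_def by blast
  then show ?thesis by (simp add: on_pde_def rhsF_def galilean_boost_def)
qed

theorem mainTheorem4:
  fixes c :: "nat \<Rightarrow> real"
  assumes "galilean_invariant c"
  shows "true_support c \<subseteq> library_G"
proof -
  have a: "c 1 + c 2 + c 3 = 0" using key[OF assms, of 1] by simp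
  have b: "- c 1 + c 2 - c 3 = 0" using key[OF assms, of "-1"] by simp
  have d: "2 * c 1 + 4 * c 2 + 8 * c 3 = 0" using key[OF assms, of 2] by simp
  have "c 1 = 0" "c 2 = 0" "c 3 = 0" using a b d by linarith+
  moreover have "\<And>x::nat. x \<in> {1..10} \<Longrightarrow> x \<in> {1,2,3,4,5,6,7,8,9,10}" by (simp, presburger)
  ultimately show ?thesis
    unfolding true_support_def library_G_def by fastforce
qed

end
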